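(* Let $\alpha=[0;a_1,a_2,\ldots]\in\mathbf{Bad}$ be such that its continued fraction expansion begins in infinitely many palindromes, i.e. there are infinitely many $n$ such that the word $a_1a_2\ldots a_n$ is a palindrome. Let $\beta$ be any real number equal to $\alpha$ up to a rational homography. Then $\inf_{q\ge1}q\cdot\Vert q\alpha\Vert\cdot\Vert q\beta\Vert=0$ and, moreover, $$\liminf_{q\to+\infty}q^2\cdot\Vert q\alpha\Vert\cdot\Vert q\beta\Vert<+\infty.$$
   Context: For a real number $y$, $\Vert y\Vert$ denotes the distance from $y$ to the nearest integer. $\mathbf{Bad}=\{\alpha\in\mathbb{R} : \inf_{q\ge1} q\Vert q\alpha\Vert>0\}$ (equivalently, real numbers with bounded partial quotients). A finite word $w_1\ldots w_n$ is a palindrome if $w_i=w_{n+1-i}$ for all $i$. A real number $\beta$ is equal to $\alpha$ up to a rational homography if $\beta=(a\alpha+b)/(c\alpha+d)$ for some integers $a,b,c,d$ with $ad-bc\neq0$. *)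

theory Defs
  imports Complex_Main "HOL-Library.Extended_Real" "HOL-Library.Liminf_Limsup"
begin

definition dist_int :: "real \<Rightarrow> real" where
  "dist_int y = \<bar>y - of_int (round y)\<bar>"

definition Bad :: "real set" where
  "Bad = {x. (INF q\<in>{1::nat..}. real q * dist_int (real q * x)) > 0}"

fun cf_rem :: "real \<Rightarrow> nat \<Rightarrow> real" where
  "cf_rem x 0 = frac x"
| "cf_rem x (Suc n) = frac (1 / cf_rem x n)"

definition cf_pq :: "real \<Rightarrow> nat \<Rightarrow> int" where
  "cf_pq x n = (if n = 0 then \<lfloor>x\<rfloor> else \<lfloor>1 / cf_rem x (n - 1)\<rfloor>)"

definition palindrome_prefix :: "(nat \<Rightarrow> 'a) \<Rightarrow> nat \<Rightarrow> bool" where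
  "palindrome_prefix w n = (\<forall>i\<in>{1..n}. w i = w (n + 1 - i))"

definition rational_homography_equiv :: "real \<Rightarrow> real \<Rightarrow> bool" where
  "rational_homography_equiv \<beta> \<alpha> =
     (\<exists>a b c d :: int. a * d - b * c \<noteq> 0 \<and>
        \<beta> = (of_int a * \<alpha> + of_int b) / (of_int c * \<alpha> + of_int d))"

end

theory Submission
  imports Defs
begin

fun qq :: "(nat \<Rightarrow> int) \<Rightarrow> nat \<Rightarrow> int" where
  "qq a 0 = 0" | "qq a (Suc 0) = 1"
| "qq a (Suc (Suc n)) = a (Suc n) * qq a (Suc n) + qq a n"

fun pp :: "(nat \<Rightarrow> int) \<Rightarrow> nat \<Rightarrow> int" where
  "pp a 0 = 1" | "pp a (Suc 0) = 0"
| "pp a (Suc (Suc n)) = a (Suc n) * pp a (Suc n) + pp a n"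

fun mmul :: "int \<times> int \<times> int \<times> int \<Rightarrow> int \<times> int \<times> int \<times> int \<Rightarrow> int \<times> int \<times> int \<times> int" where
  "mmul (a,b,c,d) (e,f,g,h) = (a*e+b*g, a*f+b*h, c*e+d*g, c*f+d*h)"

fun mtr :: "int \<times> int \<times> int \<times> int \<Rightarrow> int \<times> int \<times> int \<times> int" where
  "mtr (a,b,c,d) = (a,c,b,d)"

definition mI :: "int \<times> int \<times> int \<times> int" where "mI = (1,0,0,1)"

definition mA :: "int \<Rightarrow> int \<times> int \<times> int \<times> int" where "mA x = (x,1,1,0)"

lemma mmul_assoc: "mmul (mmul X Y) Z = mmul X (mmul Y Z)"
  by (cases X; cases Y; cases Z) (simp add: algebra_simps)

lemma mmul_I: "mmul mI X = X" "mmul X mI = X"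
  by (cases X, simp add: mI_def)+

lemma mtr_mmul: "mtr (mmul X Y) = mmul (mtr Y) (mtr X)"
  by (cases X; cases Y) (simp add: algebra_simps)

lemma mtr_I: "mtr mI = mI" by (simp add: mI_def)

lemma foldl_mmul: "foldl mmul (mmul X Y) ys = mmul X (foldl mmul Y ys)"
  by (induction ys arbitrary: Y) (simp_all add: mmul_assoc)

lemma mtr_foldl: "mtr (foldl mmul mI xs) = foldl mmul mI (rev (map mtr xs))"
proof (induction xs rule: rev_induct)
  case Nil then show ?case by (simp add: mtr_I)
next
  case (snoc x xs)
  have "mtr (foldl mmul mI (xs @ [x])) = mmul (mtr x) (mtr (foldl mmul mI xs))"
    by (simp add: mtr_mmul)
  also have "\<dots> = mmul (mtr x) (foldl mmul mI (rev (map mtr xs)))" using snoc by simp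
  also have "\<dots> = foldl mmul (mmul mI (mtr x)) (rev (map mtr xs))"
    using foldl_mmul[of "mtr x" mI "rev (map mtr xs)"] by (simp add: mmul_I)
  finally show ?case by simp
qed

lemma M_eq: "foldl mmul mI (map (\<lambda>i. mA (a i)) [1..<n+1]) = (qq a (n+1), qq a n, pp a (n+1), pp a n)"
proof (induction n)
  case 0 then show ?case by (simp add: mI_def)
next
  case (Suc n)
  have "[1..<Suc n+1] = [1..<n+1] @ [n+1]" by simp
  then show ?case using Suc by (simp add: mA_def algebra_simps)
qed

lemma pal_pq:
  assumes "\<forall>i\<in>{1..n}. a i = a (n + 1 - i)"
  shows "pp a (n+1) = qq a n"
proof -
  let ?xs = "map (\<lambda>i. mA (a i)) [1..<n+1]"
  have tr: "map mtr ?xs = ?xs" by (simp add: mA_def)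
  have len: "length ?xs = n" by (simp only: length_map length_upt)
  have "rev ?xs = ?xs"
  proof (rule nth_equalityI)
    show "length (rev ?xs) = length ?xs" by (simp only: length_rev)
    fix i assume "i < length (rev ?xs)"
    then have i: "i < n" using len by (simp only: length_rev)
    have "rev ?xs ! i = ?xs ! (n - Suc i)" using i len rev_nth[of i ?xs] by (simp only:)
    also have "\<dots> = mA (a (n - i))"
    proof -
      have l: "n - Suc i < length [1..<n+1]" using i by (simp only: length_upt)
      have e1: "[1..<n+1] ! (n - Suc i) = 1 + (n - Suc i)" by (rule nth_upt) (use i in arith)
      have e2: "1 + (n - Suc i) = n - i" using i by arith
      have "?xs ! (n - Suc i) = mA (a ([1..<n+1] ! (n - Suc i)))" by (rule nth_map[OF l])
      then show ?thesis by (simp only: e1 e2)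
    qed
    also have "a (n - i) = a (1 + i)"
    proof -
      have "1 + i \<in> {1..n}" using i by simp
      then have "a (1+i) = a (n + 1 - (1+i))" by (rule bspec[OF assms])
      moreover have "n + 1 - (1+i) = n - i" by arith
      ultimately show ?thesis by (simp only:)
    qed
    also have "mA (a (1 + i)) = ?xs ! i"
    proof -
      have l: "i < length [1..<n+1]" using i by (simp only: length_upt)
      have e1: "[1..<n+1] ! i = 1 + i" by (rule nth_upt) (use i in arith)
      show ?thesis by (simp only: nth_map[OF l] e1)
    qed
    finally show "rev ?xs ! i = ?xs ! i" .
  qed
  then have "mtr (foldl mmul mI ?xs) = foldl mmul mI ?xs" using mtr_foldl[of ?xs] tr by (simp only:)
  then have "mtr (qq a (n+1), qq a n, pp a (n+1), pp a n) = (qq a (n+1), qq a n, pp a (n+1), pp a n)"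
    by (simp only: M_eq)
  then have "(qq a (n+1), pp a (n+1), qq a n, pp a n) = (qq a (n+1), qq a n, pp a (n+1), pp a n)"
    by (simp only: mtr.simps)
  then have "fst (snd (qq a (n+1), pp a (n+1), qq a n, pp a n)) = fst (snd (qq a (n+1), qq a n, pp a (n+1), pp a n))"
    by (rule arg_cong)
  then show ?thesis by (simp only: fst_conv snd_conv)
qed


lemma frac_irr:
  fixes x :: real
  assumes "x \<notin> \<rat>"
  shows "frac x \<notin> \<rat> \<and> 0 < frac x \<and> frac x < 1"
proof -
  have "frac x \<notin> \<rat>"
  proof
    assume "frac x \<in> \<rat>"
    then have "frac x + of_int \<lfloor>x\<rfloor> \<in> \<rat>" by (simp add: Rats_add)
    then show False using assms by (simp add: frac_def)
  qed
  moreover have "frac x \<noteq> 0"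
  proof
    assume "frac x = 0"
    then have "x \<in> \<int>" by simp
    then show False using assms Ints_subset_Rats by blast
  qed
  ultimately show ?thesis using frac_ge_0[of x] frac_lt_1[of x] by linarith
qed

lemma rem_props:
  assumes "\<alpha> \<notin> \<rat>"
  shows "cf_rem \<alpha> k \<notin> \<rat> \<and> 0 < cf_rem \<alpha> k \<and> cf_rem \<alpha> k < 1"
proof (induction k)
  case 0 then show ?case using frac_irr[OF assms] by simp
next
  case (Suc k)
  have "1 / cf_rem \<alpha> k \<notin> \<rat>"
  proof
    assume "1 / cf_rem \<alpha> k \<in> \<rat>"
    then have "1 / (1 / cf_rem \<alpha> k) \<in> \<rat>" by (rule Rats_divide[OF Rats_1])
    then show False using Suc by simp
  qed
  then show ?case using frac_irr by simp
qed

lemma a_ge1: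
  assumes "\<alpha> \<notin> \<rat>"
  shows "cf_pq \<alpha> (Suc k) \<ge> 1"
proof -
  have "0 < cf_rem \<alpha> k" "cf_rem \<alpha> k < 1" using rem_props[OF assms] by auto
  then have "1 \<le> 1 / cf_rem \<alpha> k" by simp
  then show ?thesis by (simp add: cf_pq_def)
qed

lemma rem_rec: "1 / cf_rem \<alpha> k = of_int (cf_pq \<alpha> (Suc k)) + cf_rem \<alpha> (Suc k)"
  by (simp add: cf_pq_def frac_def)

lemma Q_props0:
  assumes "\<And>k. a (Suc k) \<ge> 1"
  shows "0 \<le> qq a k \<and> (k \<ge> 1 \<longrightarrow> 1 \<le> qq a k) \<and> 1 \<le> qq a (Suc k) \<and> qq a k \<le> qq a (Suc k) \<and> int k \<le> qq a (Suc k)"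
proof (induction k)
  case 0 then show ?case by simp
next
  case (Suc k)
  have q: "qq a (Suc (Suc k)) = a (Suc k) * qq a (Suc k) + qq a k" by simp
  have I1: "0 \<le> qq a k" and I2: "k \<ge> 1 \<longrightarrow> 1 \<le> qq a k" and I3: "1 \<le> qq a (Suc k)"
    and I5: "int k \<le> qq a (Suc k)" using Suc by blast+
  have A: "a (Suc k) * qq a (Suc k) \<ge> qq a (Suc k)"
    using assms[of k] I3 by (simp add: mult_le_cancel_right1)
  have B: "1 \<le> qq a k \<or> k = 0" using I2 by auto
  have C: "int (Suc k) \<le> qq a (Suc (Suc k))"
  proof (cases "k = 0")
    case True then show ?thesis using A I3 q by simp
  next
    case False then have "1 \<le> qq a k" using B by simp
    then show ?thesis using A I5 q by linarith
  qed
  show ?case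
    by (intro conjI impI; (rule C)?) (use A I1 I3 q in linarith)+
qed

lemma Q_props:
  assumes "\<And>k. a (Suc k) \<ge> 1"
  shows "1 \<le> qq a (Suc k) \<and> qq a k \<le> qq a (Suc k) \<and> int k \<le> qq a (Suc k)"
  using Q_props0[of a k] assms by blast

locale cfa =
  fixes \<alpha> :: real
  assumes irr: "\<alpha> \<notin> \<rat>" and pos: "0 < \<alpha>" and lt1: "\<alpha> < 1"
begin

abbreviation "a \<equiv> cf_pq \<alpha>"
abbreviation "r \<equiv> cf_rem \<alpha>"
abbreviation "Q \<equiv> qq a"
abbreviation "P \<equiv> pp a"
definition T :: "nat \<Rightarrow> real" where "T k = of_int (Q k) * \<alpha> - of_int (P k)"

lemma Qp: "1 \<le> Q (Suc k)" "Q k \<le> Q (Suc k)" "int k \<le> Q (Suc k)"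
  using Q_props[of a k] a_ge1[OF irr] by auto

lemma Q_nonneg: "0 \<le> Q k"
  using Q_props0[of a k] a_ge1[OF irr] by blast

lemma r_props: "0 < r k" "r k < 1"
  using rem_props[OF irr] by auto

lemma T_rec: "T (Suc k) = - r k * T k"
proof (induction k)
  case 0
  have "r 0 = \<alpha>" using pos lt1 by (simp add: frac_eq)
  then show ?case by (simp add: T_def)
next
  case (Suc k)
  have e: "T (Suc (Suc k)) = of_int (a (Suc k)) * T (Suc k) + T k"
    by (simp add: T_def algebra_simps)
  have rk: "r k > 0" using r_props by simp
  have "T k = - T (Suc k) / r k" using Suc rk by (simp add: field_simps)
  then have "T (Suc (Suc k)) = (of_int (a (Suc k)) - 1 / r k) * T (Suc k)"
    using e by (simp add: field_simps)
  also have "of_int (a (Suc k)) - 1 / r k = - r (Suc k)" using rem_rec[of \<alpha> k] by simp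
  finally show ?case .
qed

lemma T_id: "\<bar>T k\<bar> * (of_int (Q (Suc k)) + of_int (Q k) * r k) = 1"
proof (induction k)
  case 0 then show ?case by (simp add: T_def)
next
  case (Suc k)
  have rk: "r k > 0" using r_props by simp
  have "of_int (Q (Suc (Suc k))) + of_int (Q (Suc k)) * r (Suc k)
        = of_int (Q (Suc k)) * (of_int (a (Suc k)) + r (Suc k)) + of_int (Q k)"
    by (simp add: algebra_simps)
  also have "\<dots> = of_int (Q (Suc k)) / r k + of_int (Q k)"
    using rem_rec[of \<alpha> k] by simp
  finally have e: "of_int (Q (Suc (Suc k))) + of_int (Q (Suc k)) * r (Suc k)
        = of_int (Q (Suc k)) / r k + of_int (Q k)" .
  have "\<bar>T (Suc k)\<bar> = r k * \<bar>T k\<bar>" using T_rec[of k] rk by (simp add: abs_mult)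
  then have "\<bar>T (Suc k)\<bar> * (of_int (Q (Suc (Suc k))) + of_int (Q (Suc k)) * r (Suc k))
      = r k * \<bar>T k\<bar> * (of_int (Q (Suc k)) / r k + of_int (Q k))"
    using e by (simp only:)
  also have "\<dots> = \<bar>T k\<bar> * (of_int (Q (Suc k)) + of_int (Q k) * r k)"
    using rk by (simp del: cf_rem.simps add: field_simps)
  finally show ?case using Suc by simp
qed

lemma T_bound: "\<bar>T k\<bar> \<le> 1 / of_int (Q (Suc k))"
proof -
  have q1: "(1::real) \<le> of_int (Q (Suc k))" using Qp(1)[of k] by simp
  have "0 \<le> of_int (Q k) * r k" using Q_nonneg[of k] r_props[of k] by simp
  then have "of_int (Q (Suc k)) \<le> of_int (Q (Suc k)) + of_int (Q k) * r k" by simp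
  then have "\<bar>T k\<bar> * of_int (Q (Suc k)) \<le> 1"
    using T_id[of k] by (metis abs_ge_zero mult_left_mono)
  then show ?thesis using q1 by (simp add: field_simps)
qed


lemma key:
  fixes A B C D :: int and \<beta> :: real
  assumes pal: "palindrome_prefix a n"
    and nz: "of_int C * \<alpha> + of_int D \<noteq> 0"
    and beta: "\<beta> = (of_int A * \<alpha> + of_int B) / (of_int C * \<alpha> + of_int D)"
  defines "q \<equiv> C * Q n + D * Q (Suc n)"
  shows "\<bar>of_int q * \<alpha> - of_int (C * P n + D * P (Suc n))\<bar> \<le> (\<bar>of_int C\<bar> + \<bar>of_int D\<bar>) / of_int (Q (Suc n))"
    and "\<bar>of_int q * \<beta> - of_int (A * P (Suc n) + B * Q (Suc n))\<bar> \<le> (\<bar>of_int A\<bar> + \<bar>of_int C\<bar> * \<bar>\<beta>\<bar>) / of_int (Q (Suc n))"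
    and "\<bar>of_int q :: real\<bar> \<le> (\<bar>of_int C\<bar> + \<bar>of_int D\<bar>) * of_int (Q (Suc n))"
    and "\<bar>of_int q\<bar> \<ge> of_int (Q (Suc n)) * \<bar>of_int C * \<alpha> + of_int D\<bar> - \<bar>of_int C\<bar>"
proof -
  have pq: "P (Suc n) = Q n" using pal_pq[of n a] pal unfolding palindrome_prefix_def by simp
  have Qpos: "(1::real) \<le> of_int (Q (Suc n))" using Qp(1)[of n] by simp
  have Qmono: "(of_int (Q (Suc n))::real) \<le> of_int (Q (Suc (Suc n)))" using Qp(2)[of "Suc n"] by (simp only: of_int_le_iff)
  have Tn: "\<bar>T n\<bar> \<le> 1 / of_int (Q (Suc n))" by (rule T_bound)
  have "\<bar>T (Suc n)\<bar> \<le> 1 / of_int (Q (Suc (Suc n)))" by (rule T_bound)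
  also have "\<dots> \<le> 1 / of_int (Q (Suc n))" using Qpos Qmono by (simp add: frac_le)
  finally have Tn1: "\<bar>T (Suc n)\<bar> \<le> 1 / of_int (Q (Suc n))" .
  have "of_int q * \<alpha> - of_int (C * P n + D * P (Suc n)) = of_int C * T n + of_int D * T (Suc n)"
    by (simp add: q_def T_def algebra_simps)
  also have "\<bar>\<dots>\<bar> \<le> \<bar>of_int C\<bar> * \<bar>T n\<bar> + \<bar>of_int D\<bar> * \<bar>T (Suc n)\<bar>"
    unfolding abs_mult[symmetric] by (rule abs_triangle_ineq)
  also have "\<dots> \<le> \<bar>of_int C\<bar> * (1 / of_int (Q (Suc n))) + \<bar>of_int D\<bar> * (1 / of_int (Q (Suc n)))"
    by (intro add_mono mult_left_mono Tn Tn1) auto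
  also have "\<dots> = (\<bar>of_int C\<bar> + \<bar>of_int D\<bar>) / of_int (Q (Suc n))" by (simp add: add_divide_distrib)
  finally show "\<bar>of_int q * \<alpha> - of_int (C * P n + D * P (Suc n))\<bar> \<le> (\<bar>of_int C\<bar> + \<bar>of_int D\<bar>) / of_int (Q (Suc n))" .
  have qe: "(of_int q :: real) = of_int (Q (Suc n)) * (of_int C * \<alpha> + of_int D) - of_int C * T (Suc n)"
    by (simp add: q_def T_def pq algebra_simps)
  have "of_int q * \<beta> = of_int (Q (Suc n)) * (of_int A * \<alpha> + of_int B) - of_int C * T (Suc n) * \<beta>"
    using nz by (simp add: qe beta field_simps)
  then have "of_int q * \<beta> - of_int (A * P (Suc n) + B * Q (Suc n)) = (of_int A - of_int C * \<beta>) * T (Suc n)"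
    by (simp add: T_def algebra_simps)
  then have "\<bar>of_int q * \<beta> - of_int (A * P (Suc n) + B * Q (Suc n))\<bar> = \<bar>of_int A - of_int C * \<beta>\<bar> * \<bar>T (Suc n)\<bar>"
    by (simp add: abs_mult)
  also have "\<dots> \<le> (\<bar>of_int A\<bar> + \<bar>of_int C\<bar> * \<bar>\<beta>\<bar>) * (1 / of_int (Q (Suc n)))"
    by (intro mult_mono Tn1) (auto simp: abs_mult intro: order.trans[OF abs_triangle_ineq4])
  finally show "\<bar>of_int q * \<beta> - of_int (A * P (Suc n) + B * Q (Suc n))\<bar> \<le> (\<bar>of_int A\<bar> + \<bar>of_int C\<bar> * \<bar>\<beta>\<bar>) / of_int (Q (Suc n))"
    by simp
  have "\<bar>of_int q :: real\<bar> \<le> \<bar>of_int C\<bar> * \<bar>of_int (Q n)\<bar> + \<bar>of_int D\<bar> * \<bar>of_int (Q (Suc n))\<bar>"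
  proof -
    have "(of_int q::real) = of_int C * of_int (Q n) + of_int D * of_int (Q (Suc n))" by (simp add: q_def)
    then show ?thesis using abs_triangle_ineq[of "of_int C * of_int (Q n)" "of_int D * of_int (Q (Suc n)) :: real"]
      by (simp only: abs_mult)
  qed
  also have "\<dots> \<le> \<bar>of_int C\<bar> * of_int (Q (Suc n)) + \<bar>of_int D\<bar> * of_int (Q (Suc n))"
    using Q_nonneg[of n] Qp(2)[of n] Qpos by (intro add_mono mult_left_mono) auto
  finally show "\<bar>of_int q :: real\<bar> \<le> (\<bar>of_int C\<bar> + \<bar>of_int D\<bar>) * of_int (Q (Suc n))"
    by (simp add: algebra_simps)
  have "\<bar>of_int C * T (Suc n)\<bar> \<le> \<bar>of_int C\<bar> * 1"
  proof -
    have "1 / of_int (Q (Suc n)) \<le> (1::real)" using Qpos by simp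
    then have "\<bar>T (Suc n)\<bar> \<le> 1" using Tn1 by linarith
    then show ?thesis unfolding abs_mult by (intro mult_left_mono) auto
  qed
  moreover have "\<bar>of_int (Q (Suc n)) * (of_int C * \<alpha> + of_int D)\<bar> = of_int (Q (Suc n)) * \<bar>of_int C * \<alpha> + of_int D\<bar>"
    using Qpos by (simp add: abs_mult)
  ultimately show "\<bar>of_int q\<bar> \<ge> of_int (Q (Suc n)) * \<bar>of_int C * \<alpha> + of_int D\<bar> - \<bar>of_int C\<bar>"
    unfolding qe by linarith
qed

end


lemma dist_abs: "dist_int (\<bar>t\<bar> * x) \<le> \<bar>t * x - of_int m\<bar>"
proof (cases "t \<ge> 0")
  case True then show ?thesis unfolding dist_int_def using round_diff_minimal by simp
next
  case False
  then have "\<bar>t\<bar> * x = - (t * x)" by simp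
  then have "dist_int (\<bar>t\<bar> * x) \<le> \<bar>- (t * x) - of_int (- m)\<bar>"
    unfolding dist_int_def using round_diff_minimal by metis
  then show ?thesis by simp
qed

lemma dist_int_nonneg: "0 \<le> dist_int y" by (simp add: dist_int_def)

theorem theorem6:
  fixes \<alpha> \<beta> :: real
  assumes "0 < \<alpha>" and "\<alpha> < 1"
    and "\<alpha> \<in> Bad"
    and "infinite {n. palindrome_prefix (cf_pq \<alpha>) n}"
    and "rational_homography_equiv \<beta> \<alpha>"
  shows "(INF q\<in>{1::nat..}. real q * dist_int (real q * \<alpha>) * dist_int (real q * \<beta>)) = 0 \<and>
         liminf (\<lambda>q::nat. ereal (real q ^ 2 * dist_int (real q * \<alpha>) * dist_int (real q * \<beta>)))
           < \<infinity>"
proof -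
  have irr: "\<alpha> \<notin> \<rat>"
  proof
    assume "\<alpha> \<in> \<rat>"
    then obtain u v :: int where v: "v > 0" and uv: "\<alpha> = of_int u / of_int v" by (rule Rats_cases')
    have bdd: "bdd_below ((\<lambda>q. real q * dist_int (real q * \<alpha>)) ` {1::nat..})"
      by (rule bdd_belowI[of _ 0]) (auto simp: dist_int_nonneg)
    have "nat v \<in> {1::nat..}" using v by simp
    then have "(INF q\<in>{1::nat..}. real q * dist_int (real q * \<alpha>)) \<le> real (nat v) * dist_int (real (nat v) * \<alpha>)"
      by (rule cINF_lower[OF bdd])
    also have "real (nat v) * \<alpha> = of_int u" using v uv by simp
    also have "dist_int (of_int u) = 0" by (simp add: dist_int_def)
    finally show False using assms(3) unfolding Bad_def by simp
  qed
  obtain A B C D :: int where det: "A * D - B * C \<noteq> 0"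
    and beta: "\<beta> = (of_int A * \<alpha> + of_int B) / (of_int C * \<alpha> + of_int D)"
    using assms(5) unfolding rational_homography_equiv_def by blast
  have nz: "of_int C * \<alpha> + of_int D \<noteq> 0"
  proof
    assume h: "of_int C * \<alpha> + of_int D = 0"
    show False
    proof (cases "C = 0")
      case True then show False using h det by simp
    next
      case False
      then have "\<alpha> = - of_int D / of_int C" using h by (simp add: field_simps)
      then have "\<alpha> \<in> \<rat>" by simp
      then show False using irr by simp
    qed
  qed
  interpret cfa \<alpha> using irr assms(1,2) by unfold_locales
  define K :: real where "K = (\<bar>of_int C\<bar> + \<bar>of_int D\<bar>) ^ 3 * (\<bar>of_int A\<bar> + \<bar>of_int C\<bar> * \<bar>\<beta>\<bar>)"
  define f where "f = (\<lambda>q::nat. real q ^ 2 * dist_int (real q * \<alpha>) * dist_int (real q * \<beta>))"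
  have ex: "\<exists>N::nat. N \<ge> M \<and> N \<ge> 1 \<and> f N \<le> K" for M :: nat
  proof -
    define c where "c = \<bar>of_int C * \<alpha> + of_int D\<bar>"
    have c: "c > 0" using nz by (simp add: c_def)
    obtain n0 :: nat where n0: "(real M + 1 + \<bar>of_int C\<bar>) / c \<le> real n0" using real_arch_simple by blast
    obtain n where n: "n \<ge> n0" "palindrome_prefix a n"
      using assms(4) unfolding infinite_nat_iff_unbounded_le by blast
    define q where "q = C * Q n + D * Q (Suc n)"
    note k = key[OF n(2) nz beta, folded q_def]
    define N where "N = nat \<bar>q\<bar>"
    have RN: "real N = \<bar>of_int q\<bar>" by (simp add: N_def)
    have Qn: "real n \<le> of_int (Q (Suc n))" using Qp(3)[of n] by simp
    have "real M + 1 + \<bar>of_int C\<bar> \<le> real n0 * c" using n0 c by (simp add: field_simps)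
    also have "\<dots> \<le> of_int (Q (Suc n)) * c" using n(1) Qn c
      by (intro mult_right_mono) auto
    finally have "real M + 1 \<le> real N" using k(4) RN unfolding c_def by linarith
    then have NM: "N \<ge> M" "N \<ge> 1" by linarith+
    have Qpos: "(1::real) \<le> of_int (Q (Suc n))" using Qp(1)[of n] by simp
    define X where "X = \<bar>real_of_int C\<bar> + \<bar>real_of_int D\<bar>"
    define Y where "Y = \<bar>of_int A\<bar> + \<bar>of_int C\<bar> * \<bar>\<beta>\<bar>"
    define Z where "Z = real_of_int (Q (Suc n))"
    have d1: "dist_int (real N * \<alpha>) \<le> X / Z"
      using dist_abs[of "of_int q" \<alpha>] k(1) RN unfolding X_def Z_def by (metis order.trans)
    have d2: "dist_int (real N * \<beta>) \<le> Y / Z"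
      using dist_abs[of "of_int q" \<beta>] k(2) RN unfolding Y_def Z_def by (metis order.trans)
    have d3: "real N \<le> X * Z" using k(3) RN unfolding X_def Z_def by simp
    have "f N = real N ^ 2 * (dist_int (real N * \<alpha>) * dist_int (real N * \<beta>))"
      by (simp add: f_def)
    also have "\<dots> \<le> (X * Z) ^ 2 * (X / Z * (Y / Z))"
      by (intro mult_mono power_mono d3 d1 d2) (use Qpos in \<open>auto simp: dist_int_nonneg X_def Y_def Z_def\<close>)
    also have "\<dots> = X ^ 3 * Y"
    proof -
      have "Z \<noteq> 0" using Qpos unfolding Z_def by linarith
      then show ?thesis by (simp add: field_simps power2_eq_square power3_eq_cube)
    qed
    also have "\<dots> = K" unfolding K_def X_def Y_def by simp
    finally show ?thesis using NM by blast
  qed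
  have lim: "liminf (\<lambda>q. ereal (f q)) < \<infinity>"
  proof (rule ccontr)
    assume "\<not> liminf (\<lambda>q. ereal (f q)) < \<infinity>"
    then have "ereal K < liminf (\<lambda>q. ereal (f q))" by simp
    then have "eventually (\<lambda>q. ereal (f q) > ereal K) sequentially" by (rule less_LiminfD)
    then obtain M where "\<And>q. q \<ge> M \<Longrightarrow> f q > K" unfolding eventually_sequentially by auto
    then show False using ex[of M] by force
  qed
  define g where "g = (\<lambda>q::nat. real q * dist_int (real q * \<alpha>) * dist_int (real q * \<beta>))"
  have gnn: "g q \<ge> 0" for q by (simp add: g_def dist_int_nonneg)
  have bdd: "bdd_below (g ` {1::nat..})" by (rule bdd_belowI[of _ 0]) (auto simp: gnn)
  have "(INF q\<in>{1::nat..}. g q) \<le> 0"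
  proof (rule field_le_epsilon)
    fix e :: real assume e: "0 < e"
    obtain M :: nat where M: "K / e \<le> real M" using real_arch_simple by blast
    obtain N :: nat where N: "N \<ge> M + 1" "N \<ge> 1" "f N \<le> K" using ex[of "M + 1"] by blast
    have Npos: "real N > 0" using N by simp
    have "K \<le> e * real M" using M e by (simp add: field_simps)
    moreover have "e * real M < e * real N" using N(1) e by simp
    ultimately have "K < e * real N" by linarith
    have "g N * real N = f N" by (simp add: g_def f_def power2_eq_square)
    then have "g N * real N < e * real N" using N(3) \<open>K < e * real N\<close> by linarith
    then have "g N < e" using Npos by simp
    moreover have "(INF q\<in>{1::nat..}. g q) \<le> g N" using N(2) by (intro cINF_lower[OF bdd]) simp
    ultimately show "(INF q\<in>{1::nat..}. g q) \<le> 0 + e" by simp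
  qed
  moreover have "(INF q\<in>{1::nat..}. g q) \<ge> 0" by (intro cINF_greatest gnn) auto
  ultimately have "(INF q\<in>{1::nat..}. g q) = 0" by simp
  then show ?thesis using lim unfolding g_def f_def by simp
qed

end
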